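(* Let $\{A^i\}_{i=1}^N$ and $\{\tilde A^i\}_{i=1}^N$ be injective tuples of complex $n\times n$ matrices (not necessarily in canonical form). The following are equivalent: (i) for every even $L\in2\mathbb N$ there exists $\alpha_L\in\mathbb R$ with $\mathrm{tr}[A^{i_1}\cdots A^{i_L}]=e^{i\alpha_L}\mathrm{tr}[\tilde A^{i_1}\cdots\tilde A^{i_L}]$ for all $i_1,\dots,i_L$; (ii) there exist an invertible matrix $M\in\mathrm{GL}_n(\mathbb C)$ and $z\in\mathrm U(1)$ with $A^i=zM^{-1}\tilde A^iM$ for all $i$. Here $z$ is unique and $M$ is unique up to multiplication by a nonzero complex number. The same equivalence holds when $L$ in (i) ranges over odd integers $L\in2\mathbb N+1$ instead.
   Context: A tuple $\{A^i\}_{i=1}^N$ of complex $n\times n$ matrices is injective if there is a fixed $l\in\mathbb N$ such that the products $A^{i_1}\cdots A^{i_l}$ over all $(i_1,\dots,i_l)\in\{1,\dots,N\}^l$ span $\mathrm M_n(\mathbb C)$. It is in canonical form if $\sum_iA^iA^{i\dagger}=1_n$. *)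

theory Defs
  imports "Jordan_Normal_Form.Matrix"
begin

definition mat_tr :: "complex mat \<Rightarrow> complex" where
  "mat_tr X = (\<Sum>k<dim_row X. X $$ (k, k))"

definition word_prod :: "nat \<Rightarrow> (nat \<Rightarrow> complex mat) \<Rightarrow> nat list \<Rightarrow> complex mat" where
  "word_prod n A w = foldr (\<lambda>i P. A i * P) w (1\<^sub>m n)"

definition mat_cspan :: "nat \<Rightarrow> complex mat set \<Rightarrow> complex mat set" where
  "mat_cspan n S = {X. \<exists>F c. finite F \<and> F \<subseteq> S \<and>
      X = mat n n (\<lambda>(r, s). \<Sum>P\<in>F. c P * P $$ (r, s))}"

definition injective_tuple :: "nat \<Rightarrow> nat \<Rightarrow> (nat \<Rightarrow> complex mat) \<Rightarrow> bool" where
  "injective_tuple n N A \<longleftrightarrow>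
     (\<exists>l::nat. l \<ge> 1 \<and>
        mat_cspan n {word_prod n A w | w. length w = l \<and> set w \<subseteq> {..<N}} = carrier_mat n n)"

end

theory Submission
  imports Defs "Jordan_Normal_Form.Determinant"
begin


definition Wd :: "nat \<Rightarrow> nat \<Rightarrow> nat list set" where
  "Wd N m = {w. set w \<subseteq> {..<N} \<and> length w = m}"

lemma finite_Wd[simp]: "finite (Wd N m)"
  unfolding Wd_def by (rule finite_lists_length_eq) simp

definition lcS :: "nat \<Rightarrow> 'b set \<Rightarrow> ('b \<Rightarrow> complex) \<Rightarrow> ('b \<Rightarrow> complex mat) \<Rightarrow> complex mat" where
  "lcS n W c F = mat n n (\<lambda>(r,s). \<Sum>w\<in>W. c w * F w $$ (r,s))"

definition lc :: "nat \<Rightarrow> nat \<Rightarrow> (nat \<Rightarrow> complex mat) \<Rightarrow> nat \<Rightarrow> (nat list \<Rightarrow> complex) \<Rightarrow> complex mat" where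
  "lc n N B m c = lcS n (Wd N m) c (word_prod n B)"

lemma lcS_carrier[simp]: "lcS n W c F \<in> carrier_mat n n"
  and lcS_dim[simp]: "dim_row (lcS n W c F) = n" "dim_col (lcS n W c F) = n"
  unfolding lcS_def by auto

lemma lcS_index[simp]: "r<n \<Longrightarrow> s<n \<Longrightarrow> lcS n W c F $$ (r,s) = (\<Sum>w\<in>W. c w * F w $$ (r,s))"
  unfolding lcS_def by auto

lemma lc_carrier[simp]: "lc n N B m c \<in> carrier_mat n n"
  and lc_dim[simp]: "dim_row (lc n N B m c) = n" "dim_col (lc n N B m c) = n"
  unfolding lc_def by auto

lemma word_prod_Nil[simp]: "word_prod n B [] = 1\<^sub>m n"
  and word_prod_Cons[simp]: "word_prod n B (i#w) = B i * word_prod n B w"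
  unfolding word_prod_def by auto

lemma word_prod_carrier:
  assumes "\<forall>i<N. B i \<in> carrier_mat n n" "set w \<subseteq> {..<N}"
  shows "word_prod n B w \<in> carrier_mat n n"
  using assms(2) by (induct w) (use assms(1) in auto)

lemma word_prod_append:
  assumes "\<forall>i<N. B i \<in> carrier_mat n n" "set u \<subseteq> {..<N}" "set w \<subseteq> {..<N}"
  shows "word_prod n B (u@w) = word_prod n B u * word_prod n B w"
  using assms(2)
proof (induct u)
  case Nil
  then show ?case using word_prod_carrier[OF assms(1,3)] by simp
next
  case (Cons i u)
  then have "B i \<in> carrier_mat n n" "word_prod n B u \<in> carrier_mat n n"
    using assms word_prod_carrier by auto
  with Cons show ?case using word_prod_carrier[OF assms(1,3)] by simp
qed

lemma mult_index:
  assumes "X \<in> carrier_mat n n" "Y \<in> carrier_mat n n" "r < n" "s < n"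
  shows "(X * Y) $$ (r,s) = (\<Sum>k<n. X $$ (r,k) * Y $$ (k,s))"
  using assms by (auto simp: scalar_prod_def intro!: sum.cong)

lemma lcS_mult_right:
  assumes "X \<in> carrier_mat n n" "\<forall>w\<in>W. F w \<in> carrier_mat n n" "finite W"
  shows "lcS n W c F * X = lcS n W c (\<lambda>w. F w * X)"
proof (rule eq_matI)
  fix r s assume rs: "r < dim_row (lcS n W c (\<lambda>w. F w * X))" "s < dim_col (lcS n W c (\<lambda>w. F w * X))"
  then have r: "r < n" and s: "s < n" by auto
  have "(lcS n W c F * X) $$ (r,s) = (\<Sum>k<n. (\<Sum>w\<in>W. c w * F w $$ (r,k)) * X $$ (k,s))"
    using mult_index[OF lcS_carrier assms(1) r s] r by simp
  also have "\<dots> = (\<Sum>w\<in>W. c w * (\<Sum>k<n. F w $$ (r,k) * X $$ (k,s)))"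
    by (simp add: sum_distrib_right sum_distrib_left mult.assoc sum.swap[of _ W])
  also have "\<dots> = lcS n W c (\<lambda>w. F w * X) $$ (r,s)"
  proof -
    have "\<And>w. w \<in> W \<Longrightarrow> (F w * X) $$ (r,s) = (\<Sum>k<n. F w $$ (r,k) * X $$ (k,s))"
      using mult_index[OF _ assms(1) r s] assms(2) by auto
    then show ?thesis using r s by simp
  qed
  finally show "(lcS n W c F * X) $$ (r,s) = lcS n W c (\<lambda>w. F w * X) $$ (r,s)" .
qed (use assms in auto)

lemma lcS_mult_left:
  assumes "X \<in> carrier_mat n n" "\<forall>w\<in>W. F w \<in> carrier_mat n n" "finite W"
  shows "X * lcS n W c F = lcS n W c (\<lambda>w. X * F w)"
proof (rule eq_matI)
  fix r s assume rs: "r < dim_row (lcS n W c (\<lambda>w. X * F w))" "s < dim_col (lcS n W c (\<lambda>w. X * F w))"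
  then have r: "r < n" and s: "s < n" by auto
  have "(X * lcS n W c F) $$ (r,s) = (\<Sum>k<n. X $$ (r,k) * (\<Sum>w\<in>W. c w * F w $$ (k,s)))"
    using mult_index[OF assms(1) lcS_carrier r s] s by simp
  also have "\<dots> = (\<Sum>w\<in>W. c w * (\<Sum>k<n. X $$ (r,k) * F w $$ (k,s)))"
    by (simp add: sum_distrib_right sum_distrib_left mult.assoc mult.left_commute sum.swap[of _ W])
  also have "\<dots> = lcS n W c (\<lambda>w. X * F w) $$ (r,s)"
  proof -
    have "\<And>w. w \<in> W \<Longrightarrow> (X * F w) $$ (r,s) = (\<Sum>k<n. X $$ (r,k) * F w $$ (k,s))"
      using mult_index[OF assms(1) _ r s] assms(2) by auto
    then show ?thesis using r s by simp
  qed
  finally show "(X * lcS n W c F) $$ (r,s) = lcS n W c (\<lambda>w. X * F w) $$ (r,s)" .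
qed (use assms in auto)

lemma lcS_lcS:
  assumes "finite W" "finite V"
  shows "lcS n W a (\<lambda>w. lcS n V (e w) F) = lcS n V (\<lambda>v. \<Sum>w\<in>W. a w * e w v) F"
proof (rule eq_matI)
  fix i j assume "i < dim_row (lcS n V (\<lambda>v. \<Sum>w\<in>W. a w * e w v) F)" "j < dim_col (lcS n V (\<lambda>v. \<Sum>w\<in>W. a w * e w v) F)"
  then have ij: "i < n" "j < n" by auto
  have "lcS n W a (\<lambda>w. lcS n V (e w) F) $$ (i,j) = (\<Sum>w\<in>W. \<Sum>v\<in>V. a w * e w v * F v $$ (i,j))"
    using ij by (simp add: sum_distrib_left mult.assoc)
  also have "\<dots> = (\<Sum>v\<in>V. \<Sum>w\<in>W. a w * e w v * F v $$ (i,j))" by (rule sum.swap)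
  also have "\<dots> = lcS n V (\<lambda>v. \<Sum>w\<in>W. a w * e w v) F $$ (i,j)"
    using ij by (simp add: sum_distrib_right)
  finally show "lcS n W a (\<lambda>w. lcS n V (e w) F) $$ (i,j) = lcS n V (\<lambda>v. \<Sum>w\<in>W. a w * e w v) F $$ (i,j)" .
qed auto

lemma lcS_add: "lcS n W c F + lcS n W d F = lcS n W (\<lambda>w. c w + d w) F"
  by (rule eq_matI) (auto simp: sum.distrib distrib_right)

lemma lcS_diff: "lcS n W c F - lcS n W d F = lcS n W (\<lambda>w. c w - d w) F"
  by (rule eq_matI) (auto simp: sum_subtractf left_diff_distrib)

lemma lcS_smult: "a \<cdot>\<^sub>m lcS n W c F = lcS n W (\<lambda>w. a * c w) F"
  by (rule eq_matI) (auto simp: sum_distrib_left mult.assoc)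

lemma lcS_cong: "(\<And>w. w \<in> W \<Longrightarrow> c w = d w) \<Longrightarrow> (\<And>w. w \<in> W \<Longrightarrow> F w = G w) \<Longrightarrow> lcS n W c F = lcS n W d G"
  unfolding lcS_def by (intro cong_mat refl) (auto intro!: sum.cong)

lemma sum_delta_mult:
  assumes "finite W" "w \<in> W"
  shows "(\<Sum>u\<in>W. (if u = w then 1 else 0) * (g u :: complex)) = g w"
proof -
  have "(\<Sum>u\<in>W. (if u = w then 1 else 0) * g u) = (\<Sum>u\<in>W. (if u = w then g u else 0))"
    by (rule sum.cong) auto
  then show ?thesis using assms by simp
qed

lemma lcS_delta:
  assumes "finite W" "w \<in> W" "F w \<in> carrier_mat n n"
  shows "lcS n W (\<lambda>u. if u = w then 1 else 0) F = F w"
  by (rule eq_matI) (use assms in \<open>auto simp: sum_delta_mult\<close>)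

lemma mat_tr_lcS:
  assumes "finite W" "\<forall>w\<in>W. F w \<in> carrier_mat n n"
  shows "mat_tr (lcS n W c F) = (\<Sum>w\<in>W. c w * mat_tr (F w))"
proof -
  have "mat_tr (lcS n W c F) = (\<Sum>k<n. \<Sum>w\<in>W. c w * F w $$ (k, k))"
    unfolding mat_tr_def by simp
  also have "\<dots> = (\<Sum>w\<in>W. \<Sum>k<n. c w * F w $$ (k, k))" by (rule sum.swap)
  also have "\<dots> = (\<Sum>w\<in>W. c w * mat_tr (F w))"
    unfolding mat_tr_def using assms(2) by (auto simp: sum_distrib_left intro!: sum.cong)
  finally show ?thesis .
qed

lemma mat_tr_comm:
  assumes "X \<in> carrier_mat n n" "Y \<in> carrier_mat n n"
  shows "mat_tr (X * Y) = mat_tr (Y * X)"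
proof -
  have "mat_tr (X * Y) = (\<Sum>k<n. \<Sum>j<n. X $$ (k,j) * Y $$ (j,k))"
    unfolding mat_tr_def using assms by (auto intro!: sum.cong simp: scalar_prod_def)
  also have "\<dots> = (\<Sum>j<n. \<Sum>k<n. Y $$ (j,k) * X $$ (k,j))"
    by (subst sum.swap) (simp add: mult.commute)
  also have "\<dots> = mat_tr (Y * X)"
    unfolding mat_tr_def using assms by (auto intro!: sum.cong simp: scalar_prod_def)
  finally show ?thesis .
qed

lemma Wd_word_carrier:
  assumes "\<forall>i<N. B i \<in> carrier_mat n n" "w \<in> Wd N m"
  shows "word_prod n B w \<in> carrier_mat n n"
  using assms word_prod_carrier unfolding Wd_def by blast

lemma lc_word:
  assumes "\<forall>i<N. B i \<in> carrier_mat n n" "w \<in> Wd N m"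
  shows "word_prod n B w = lc n N B m (\<lambda>u. if u = w then 1 else 0)"
  unfolding lc_def using lcS_delta[of "Wd N m" w "word_prod n B" n] Wd_word_carrier[OF assms] assms(2) by simp

lemma bij_append_Wd: "bij_betw (\<lambda>(u,w). u @ w) (Wd N a \<times> Wd N b) (Wd N (a+b))"
proof (rule bij_betwI')
  fix x y assume "x \<in> Wd N a \<times> Wd N b" "y \<in> Wd N a \<times> Wd N b"
  then show "((case x of (u, w) \<Rightarrow> u @ w) = (case y of (u, w) \<Rightarrow> u @ w)) = (x = y)"
    by (cases x, cases y) (auto simp: Wd_def)
next
  fix x assume "x \<in> Wd N a \<times> Wd N b"
  then show "(case x of (u, w) \<Rightarrow> u @ w) \<in> Wd N (a + b)" by (auto simp: Wd_def)
next
  fix v assume v: "v \<in> Wd N (a + b)"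
  then have "(take a v, drop a v) \<in> Wd N a \<times> Wd N b"
    using set_take_subset set_drop_subset by (fastforce simp: Wd_def)
  then show "\<exists>x\<in>Wd N a \<times> Wd N b. v = (case x of (u, w) \<Rightarrow> u @ w)"
    by (intro bexI[of _ "(take a v, drop a v)"]) auto
qed

lemma lc_mult:
  assumes B: "\<forall>i<N. B i \<in> carrier_mat n n"
  shows "lc n N B a c * lc n N B b d = lc n N B (a+b) (\<lambda>v. c (take a v) * d (drop a v))"
proof -
  have "lc n N B a c * lc n N B b d = lcS n (Wd N a) c (\<lambda>u. word_prod n B u * lc n N B b d)"
    unfolding lc_def by (rule lcS_mult_right) (use Wd_word_carrier[OF B] in auto)
  also have "\<dots> = lcS n (Wd N a) c (\<lambda>u. lcS n (Wd N b) d (\<lambda>w. word_prod n B (u @ w)))"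
  proof (rule lcS_cong[OF refl])
    fix u assume u: "u \<in> Wd N a"
    have "word_prod n B u * lc n N B b d = lcS n (Wd N b) d (\<lambda>w. word_prod n B u * word_prod n B w)"
      unfolding lc_def by (rule lcS_mult_left) (use Wd_word_carrier[OF B] u in auto)
    also have "\<dots> = lcS n (Wd N b) d (\<lambda>w. word_prod n B (u @ w))"
      by (rule lcS_cong[OF refl]) (use u word_prod_append[OF B] in \<open>auto simp: Wd_def\<close>)
    finally show "word_prod n B u * lc n N B b d = lcS n (Wd N b) d (\<lambda>w. word_prod n B (u @ w))" .
  qed
  also have "\<dots> = lc n N B (a+b) (\<lambda>v. c (take a v) * d (drop a v))"
  proof (rule eq_matI)
    fix r s assume "r < dim_row (lc n N B (a + b) (\<lambda>v. c (take a v) * d (drop a v)))"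
      "s < dim_col (lc n N B (a + b) (\<lambda>v. c (take a v) * d (drop a v)))"
    then have r: "r < n" and s: "s < n" by auto
    let ?g = "\<lambda>v. c (take a v) * d (drop a v) * word_prod n B v $$ (r,s)"
    have "lcS n (Wd N a) c (\<lambda>u. lcS n (Wd N b) d (\<lambda>w. word_prod n B (u @ w))) $$ (r,s)
        = (\<Sum>u\<in>Wd N a. \<Sum>w\<in>Wd N b. c u * (d w * word_prod n B (u @ w) $$ (r,s)))"
      using r s by (simp add: sum_distrib_left)
    also have "\<dots> = (\<Sum>x\<in>Wd N a \<times> Wd N b. ?g ((\<lambda>(u,w). u @ w) x))"
      by (subst sum.cartesian_product) (auto intro!: sum.cong simp: Wd_def)
    also have "\<dots> = (\<Sum>v\<in>Wd N (a+b). ?g v)"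
      by (rule sum.reindex_bij_betw[OF bij_append_Wd])
    also have "\<dots> = lc n N B (a + b) (\<lambda>v. c (take a v) * d (drop a v)) $$ (r,s)"
      unfolding lc_def using r s by simp
    finally show "lcS n (Wd N a) c (\<lambda>u. lcS n (Wd N b) d (\<lambda>w. word_prod n B (u @ w))) $$ (r,s)
       = lc n N B (a + b) (\<lambda>v. c (take a v) * d (drop a v)) $$ (r,s)" .
  qed auto
  finally show ?thesis .
qed



definition spans :: "nat \<Rightarrow> nat \<Rightarrow> (nat \<Rightarrow> complex mat) \<Rightarrow> nat \<Rightarrow> bool" where
  "spans n N B m \<longleftrightarrow> (\<forall>X\<in>carrier_mat n n. \<exists>c. X = lc n N B m c)"

definition Rel :: "nat \<Rightarrow> nat \<Rightarrow> (nat \<Rightarrow> complex mat) \<Rightarrow> (nat \<Rightarrow> complex mat) \<Rightarrow> nat \<Rightarrow> complex mat \<Rightarrow> complex mat \<Rightarrow> bool" where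
  "Rel n N B C m X Y \<longleftrightarrow> (\<exists>c. X = lc n N B m c \<and> Y = lc n N C m c)"

lemma word_single: "B i \<in> carrier_mat n n \<Longrightarrow> word_prod n B [i] = B i"
  by simp

lemma inj_spans:
  assumes B: "\<forall>i<N. B i \<in> carrier_mat n n" and inj: "injective_tuple n N B"
  shows "\<exists>l\<ge>1. spans n N B l"
proof -
  obtain l where l: "l \<ge> 1"
    and sp: "mat_cspan n {word_prod n B w | w. length w = l \<and> set w \<subseteq> {..<N}} = carrier_mat n n"
    using inj unfolding injective_tuple_def by blast
  have "spans n N B l" unfolding spans_def
  proof
    fix X :: "complex mat" assume X: "X \<in> carrier_mat n n"
    then obtain F c where F: "finite F" "F \<subseteq> {word_prod n B w | w. length w = l \<and> set w \<subseteq> {..<N}}"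
      and XF: "X = mat n n (\<lambda>(r, s). \<Sum>P\<in>F. c P * P $$ (r, s))"
      using sp unfolding mat_cspan_def by blast
    define rep where "rep P = (SOME w. w \<in> Wd N l \<and> P = word_prod n B w)" for P
    have rep: "rep P \<in> Wd N l \<and> P = word_prod n B (rep P)" if "P \<in> F" for P
    proof -
      have "\<exists>w. w \<in> Wd N l \<and> P = word_prod n B w" using F that by (auto simp: Wd_def)
      then show ?thesis unfolding rep_def by (rule someI_ex)
    qed
    have "X = lcS n F c (\<lambda>P. P)" unfolding XF lcS_def by simp
    also have "\<dots> = lcS n F c (\<lambda>P. lc n N B l (\<lambda>u. if u = rep P then 1 else 0))"
      by (rule lcS_cong[OF refl]) (use rep lc_word[OF B] in metis)
    also have "\<dots> = lc n N B l (\<lambda>v. \<Sum>P\<in>F. c P * (if v = rep P then 1 else 0))"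
      unfolding lc_def by (rule lcS_lcS[OF F(1) finite_Wd])
    finally show "\<exists>c. X = lc n N B l c" by blast
  qed
  with l show ?thesis by blast
qed

lemma spans_succ:
  assumes B: "\<forall>i<N. B i \<in> carrier_mat n n" and sp: "spans n N B l" and l: "l \<ge> 1"
  shows "spans n N B (l+1)"
  unfolding spans_def
proof
  fix X :: "complex mat" assume X: "X \<in> carrier_mat n n"
  obtain c0 where c0: "1\<^sub>m n = lc n N B l c0"
    using sp[unfolded spans_def, rule_format, OF one_carrier_mat] by blast
  have wc: "\<And>w. w \<in> Wd N l \<Longrightarrow> word_prod n B w \<in> carrier_mat n n" using Wd_word_carrier[OF B] by blast
  have tlc: "\<And>w. w \<in> Wd N l \<Longrightarrow> word_prod n B (tl w) * X \<in> carrier_mat n n"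
  proof -
    fix w assume "w \<in> Wd N l"
    moreover have "set (tl w) \<subseteq> set w" by (cases w) auto
    ultimately have "set (tl w) \<subseteq> {..<N}" by (auto simp: Wd_def)
    then have "word_prod n B (tl w) \<in> carrier_mat n n" by (rule word_prod_carrier[OF B])
    then show "word_prod n B (tl w) * X \<in> carrier_mat n n" using X by simp
  qed
  define d where "d w = (SOME c. word_prod n B (tl w) * X = lc n N B l c)" for w
  have d: "word_prod n B (tl w) * X = lc n N B l (d w)" if "w \<in> Wd N l" for w
  proof -
    have "\<exists>c. word_prod n B (tl w) * X = lc n N B l c"
      by (rule sp[unfolded spans_def, rule_format, OF tlc[OF that]])
    then show ?thesis unfolding d_def by (rule someI_ex)
  qed
  have key: "word_prod n B w * X = lc n N B (1 + l) (\<lambda>v. (if take 1 v = [hd w] then 1 else 0) * d w (drop 1 v))"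
    if w: "w \<in> Wd N l" for w
  proof -
    from w l have wne: "w \<noteq> []" by (auto simp: Wd_def)
    then obtain i u where wiu: "w = i # u" by (cases w) auto
    then have w1: "w = hd w # tl w" "hd w < N" "set (tl w) \<subseteq> {..<N}" using w by (auto simp: Wd_def)
    have hw: "[hd w] \<in> Wd N 1" using w1 by (auto simp: Wd_def)
    have "word_prod n B w * X = B (hd w) * (word_prod n B (tl w) * X)"
      using w1 B word_prod_carrier[OF B w1(3)] X wiu by (simp add: assoc_mult_mat[of _ n n _ n _ n])
    also have "\<dots> = lc n N B 1 (\<lambda>u. if u = [hd w] then 1 else 0) * lc n N B l (d w)"
    proof -
      have "B (hd w) \<in> carrier_mat n n" using w1 B by blast
      then show ?thesis using d[OF w] lc_word[OF B hw] by simp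
    qed
    also have "\<dots> = lc n N B (1 + l) (\<lambda>v. (if take 1 v = [hd w] then 1 else 0) * d w (drop 1 v))"
      by (rule lc_mult[OF B])
    finally show ?thesis .
  qed
  have "X = 1\<^sub>m n * X" using X by simp
  also have "\<dots> = lcS n (Wd N l) c0 (\<lambda>w. word_prod n B w * X)"
    unfolding c0 lc_def by (rule lcS_mult_right[OF X]) (use wc in auto)
  also have "\<dots> = lcS n (Wd N l) c0 (\<lambda>w. lc n N B (1 + l) (\<lambda>v. (if take 1 v = [hd w] then 1 else 0) * d w (drop 1 v)))"
    by (rule lcS_cong[OF refl]) (rule key)
  also have "\<dots> = lc n N B (1 + l) (\<lambda>v. \<Sum>w\<in>Wd N l. c0 w * ((if take 1 v = [hd w] then 1 else 0) * d w (drop 1 v)))"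
    unfolding lc_def by (rule lcS_lcS) auto
  finally show "\<exists>c. X = lc n N B (l+1) c" by (simp only: add.commute[of l 1]) blast
qed

lemma spans_ge:
  assumes B: "\<forall>i<N. B i \<in> carrier_mat n n" and sp: "spans n N B l" and l: "l \<ge> 1" and m: "m \<ge> l"
  shows "spans n N B m"
  using m
proof (induct m rule: dec_induct)
  case (step m)
  then show ?case using spans_succ[OF B] l by simp
qed (rule sp)

definition E :: "nat \<Rightarrow> nat \<Rightarrow> nat \<Rightarrow> complex mat" where
  "E n a b = mat n n (\<lambda>(i,j). if i = a \<and> j = b then 1 else 0)"

lemma E_carrier[simp]: "E n a b \<in> carrier_mat n n"
  and E_dim[simp]: "dim_row (E n a b) = n" "dim_col (E n a b) = n"
  unfolding E_def by simp_all

lemma tr_E: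
  assumes Y: "Y \<in> carrier_mat n n" and a: "a < n" and b: "b < n"
  shows "mat_tr (E n a b * Y) = Y $$ (b,a)"
proof -
  have "mat_tr (E n a b * Y) = (\<Sum>k<n. (E n a b * Y) $$ (k,k))"
    unfolding mat_tr_def using Y by simp
  also have "\<dots> = (\<Sum>k<n. \<Sum>j<n. E n a b $$ (k,j) * Y $$ (j,k))"
    using Y by (intro sum.cong refl) (simp add: scalar_prod_def atLeast0LessThan)
  also have "\<dots> = (\<Sum>k<n. if k = a then Y $$ (b,k) else 0)"
  proof (intro sum.cong refl)
    fix k assume k: "k \<in> {..<n}"
    have "(\<Sum>j<n. E n a b $$ (k,j) * Y $$ (j,k)) = (\<Sum>j<n. if j = b then (if k = a then Y $$ (j,k) else 0) else 0)"
      using k by (intro sum.cong refl) (auto simp: E_def)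
    also have "\<dots> = (if k = a then Y $$ (b,k) else 0)" using b by simp
    finally show "(\<Sum>j<n. E n a b $$ (k,j) * Y $$ (j,k)) = (if k = a then Y $$ (b,k) else 0)" .
  qed
  also have "\<dots> = Y $$ (b,a)" using a by simp
  finally show ?thesis .
qed

lemma nondeg:
  assumes Y: "Y \<in> carrier_mat n n" and sp: "spans n N C K"
    and tr0: "\<And>d. mat_tr (lc n N C K d * Y) = 0"
  shows "Y = 0\<^sub>m n n"
proof (rule eq_matI)
  fix r s assume "r < dim_row (0\<^sub>m n n :: complex mat)" "s < dim_col (0\<^sub>m n n :: complex mat)"
  then have r: "r < n" and s: "s < n" by auto
  obtain d where d: "E n s r = lc n N C K d"
    using sp[unfolded spans_def, rule_format, OF E_carrier] by blast
  have "Y $$ (r,s) = mat_tr (E n s r * Y)" using tr_E[OF Y s r] by simp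
  also have "\<dots> = 0" unfolding d by (rule tr0)
  finally show "Y $$ (r,s) = 0\<^sub>m n n $$ (r,s)" using r s by simp
qed (use Y in auto)

definition TH :: "nat \<Rightarrow> nat \<Rightarrow> (nat \<Rightarrow> complex mat) \<Rightarrow> (nat \<Rightarrow> complex mat) \<Rightarrow> (nat \<Rightarrow> bool) \<Rightarrow> bool" where
  "TH n N B C P \<longleftrightarrow> (\<forall>L. P L \<longrightarrow> (\<exists>\<kappa>. cmod \<kappa> = 1 \<and>
      (\<forall>w\<in>Wd N L. mat_tr (word_prod n C w) = \<kappa> * mat_tr (word_prod n B w))))"

lemma TH_sym:
  assumes "TH n N B C P" shows "TH n N C B P"
  unfolding TH_def
proof (intro allI impI)
  fix L assume "P L"
  then obtain \<kappa> where k: "cmod \<kappa> = 1" "\<forall>w\<in>Wd N L. mat_tr (word_prod n C w) = \<kappa> * mat_tr (word_prod n B w)"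
    using assms unfolding TH_def by blast
  then have k0: "\<kappa> \<noteq> 0" by auto
  have "cmod (inverse \<kappa>) = 1" using k by (simp add: norm_inverse)
  moreover have "\<forall>w\<in>Wd N L. mat_tr (word_prod n B w) = inverse \<kappa> * mat_tr (word_prod n C w)"
    using k(2) k0 by simp
  ultimately show "\<exists>\<kappa>. cmod \<kappa> = 1 \<and> (\<forall>w\<in>Wd N L. mat_tr (word_prod n B w) = \<kappa> * mat_tr (word_prod n C w))"
    by blast
qed

lemma tr_lc:
  assumes B: "\<forall>i<N. B i \<in> carrier_mat n n"
  shows "mat_tr (lc n N B m c) = (\<Sum>w\<in>Wd N m. c w * mat_tr (word_prod n B w))"
  unfolding lc_def by (rule mat_tr_lcS) (use Wd_word_carrier[OF B] in auto)

lemma Rel_trace: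
  assumes B: "\<forall>i<N. B i \<in> carrier_mat n n" and C: "\<forall>i<N. C i \<in> carrier_mat n n"
    and th: "TH n N B C P" and Pm: "P m"
  shows "\<exists>\<kappa>. cmod \<kappa> = 1 \<and> (\<forall>X Y. Rel n N B C m X Y \<longrightarrow> mat_tr Y = \<kappa> * mat_tr X)"
proof -
  obtain \<kappa> where k: "cmod \<kappa> = 1" "\<forall>w\<in>Wd N m. mat_tr (word_prod n C w) = \<kappa> * mat_tr (word_prod n B w)"
    using th Pm unfolding TH_def by blast
  have "mat_tr Y = \<kappa> * mat_tr X" if R: "Rel n N B C m X Y" for X Y
  proof -
    obtain c where c: "X = lc n N B m c" "Y = lc n N C m c" using R unfolding Rel_def by blast
    have "mat_tr Y = (\<Sum>w\<in>Wd N m. c w * (\<kappa> * mat_tr (word_prod n B w)))"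
      unfolding c tr_lc[OF C] using k(2) by simp
    also have "\<dots> = \<kappa> * mat_tr X"
      unfolding c tr_lc[OF B] by (simp add: sum_distrib_left mult.left_commute)
    finally show ?thesis .
  qed
  with k(1) show ?thesis by blast
qed

lemma Rel_carrier: "Rel n N B C m X Y \<Longrightarrow> X \<in> carrier_mat n n \<and> Y \<in> carrier_mat n n"
  unfolding Rel_def by auto

lemma Rel_sym: "Rel n N B C m X Y \<Longrightarrow> Rel n N C B m Y X"
  unfolding Rel_def by blast

lemma Rel_mult:
  assumes B: "\<forall>i<N. B i \<in> carrier_mat n n" and C: "\<forall>i<N. C i \<in> carrier_mat n n"
    and "Rel n N B C a X Y" "Rel n N B C b X' Y'"
  shows "Rel n N B C (a+b) (X * X') (Y * Y')"
proof -
  obtain c d where e: "X = lc n N B a c" "Y = lc n N C a c" "X' = lc n N B b d" "Y' = lc n N C b d"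
    using assms(3,4) unfolding Rel_def by blast
  show ?thesis unfolding Rel_def
    by (rule exI[of _ "\<lambda>v. c (take a v) * d (drop a v)"]) (simp add: e lc_mult[OF B] lc_mult[OF C])
qed

lemma Rel_word:
  assumes B: "\<forall>i<N. B i \<in> carrier_mat n n" and C: "\<forall>i<N. C i \<in> carrier_mat n n" and w: "w \<in> Wd N m"
  shows "Rel n N B C m (word_prod n B w) (word_prod n C w)"
  unfolding Rel_def using lc_word[OF B w] lc_word[OF C w] by blast

lemma Rel_diff:
  assumes "Rel n N B C m X Y" "Rel n N B C m X' Y'"
  shows "Rel n N B C m (X - X') (Y - Y')"
proof -
  obtain c d where e: "X = lc n N B m c" "Y = lc n N C m c" "X' = lc n N B m d" "Y' = lc n N C m d"
    using assms unfolding Rel_def by blast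
  show ?thesis unfolding Rel_def
    by (rule exI[of _ "\<lambda>w. c w - d w"]) (simp add: e lc_def lcS_diff)
qed

lemma Rel_zero:
  assumes B: "\<forall>i<N. B i \<in> carrier_mat n n" and C: "\<forall>i<N. C i \<in> carrier_mat n n"
    and th: "TH n N B C P" and sp: "spans n N C K" and PK: "P (K + m)"
    and R: "Rel n N B C m (0\<^sub>m n n) Y"
  shows "Y = 0\<^sub>m n n"
proof -
  obtain \<kappa> where k: "\<forall>X Y. Rel n N B C (K+m) X Y \<longrightarrow> mat_tr Y = \<kappa> * mat_tr X"
    using Rel_trace[OF B C th PK] by blast
  show ?thesis
  proof (rule nondeg[OF _ sp])
    show Y: "Y \<in> carrier_mat n n" using Rel_carrier[OF R] by blast
    fix d
    have "Rel n N B C K (lc n N B K d) (lc n N C K d)" unfolding Rel_def by blast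
    from Rel_mult[OF B C this R] k
    have "mat_tr (lc n N C K d * Y) = \<kappa> * mat_tr (lc n N B K d * 0\<^sub>m n n)" by blast
    also have "lc n N B K d * 0\<^sub>m n n = 0\<^sub>m n n" by simp
    also have "mat_tr (0\<^sub>m n n :: complex mat) = 0" unfolding mat_tr_def by simp
    finally show "mat_tr (lc n N C K d * Y) = 0" by simp
  qed
qed

lemma Rel_fun:
  assumes B: "\<forall>i<N. B i \<in> carrier_mat n n" and C: "\<forall>i<N. C i \<in> carrier_mat n n"
    and th: "TH n N B C P" and sp: "spans n N C K" and PK: "P (K + m)"
    and R1: "Rel n N B C m X Y" and R2: "Rel n N B C m X Y'"
  shows "Y = Y'"
proof -
  have X: "X \<in> carrier_mat n n" and Y: "Y \<in> carrier_mat n n" and Y': "Y' \<in> carrier_mat n n"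
    using Rel_carrier[OF R1] Rel_carrier[OF R2] by auto
  have "Rel n N B C m (X - X) (Y - Y')" by (rule Rel_diff[OF R1 R2])
  then have "Rel n N B C m (0\<^sub>m n n) (Y - Y')" using X by simp
  then have "Y - Y' = 0\<^sub>m n n" by (rule Rel_zero[OF B C th sp PK])
  then have z: "Y - Y' = 0\<^sub>m n n" .
  show ?thesis
  proof (rule eq_matI)
    fix i j assume ij: "i < dim_row Y'" "j < dim_col Y'"
    then have "(Y - Y') $$ (i,j) = 0" unfolding z using Y' by simp
    then show "Y $$ (i,j) = Y' $$ (i,j)" using ij Y Y' by simp
  qed (use Y Y' in auto)
qed

lemma unimod_exp:
  assumes "cmod u = 1" shows "\<exists>\<alpha>::real. u = exp (\<i> * complex_of_real \<alpha>)"
proof -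
  have u0: "u \<noteq> 0" using assms by auto
  have "exp (\<i> * complex_of_real (Arg u)) = sgn u" using cis_Arg[OF u0] by (simp add: cis_conv_exp)
  also have "\<dots> = u" using assms by (simp add: sgn_eq)
  finally show ?thesis by metis
qed

lemma QE_index:
  fixes Q :: "complex mat"
  assumes Q: "Q \<in> carrier_mat n n" and a: "a < n" and r: "r < n" and s: "s < n"
  shows "(Q * E n a b) $$ (r,s) = (if s = b then Q $$ (r,a) else 0)"
proof -
  have "(Q * E n a b) $$ (r,s) = (\<Sum>j<n. Q $$ (r,j) * E n a b $$ (j,s))"
    using mult_index[OF Q E_carrier r s] .
  also have "\<dots> = (\<Sum>j<n. if j = a then (if s = b then Q $$ (r,j) else 0) else 0)"
    using s by (intro sum.cong refl) (auto simp: E_def)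
  also have "\<dots> = (if s = b then Q $$ (r,a) else 0)" using a by simp
  finally show ?thesis .
qed

lemma EQ_index:
  fixes Q :: "complex mat"
  assumes Q: "Q \<in> carrier_mat n n" and b: "b < n" and r: "r < n" and s: "s < n"
  shows "(E n a b * Q) $$ (r,s) = (if r = a then Q $$ (b,s) else 0)"
proof -
  have "(E n a b * Q) $$ (r,s) = (\<Sum>j<n. E n a b $$ (r,j) * Q $$ (j,s))"
    using mult_index[OF E_carrier Q r s] .
  also have "\<dots> = (\<Sum>j<n. if j = b then (if r = a then Q $$ (j,s) else 0) else 0)"
    using r by (intro sum.cong refl) (auto simp: E_def)
  also have "\<dots> = (if r = a then Q $$ (b,s) else 0)" using b by simp
  finally show ?thesis .
qed

lemma commute_scalar:
  fixes Q :: "complex mat"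
  assumes n: "n \<ge> 1" and Q: "Q \<in> carrier_mat n n"
    and comm: "\<And>X. X \<in> carrier_mat n n \<Longrightarrow> Q * X = X * Q"
  shows "Q = Q $$ (0,0) \<cdot>\<^sub>m 1\<^sub>m n"
proof (rule eq_matI)
  fix r s assume "r < dim_row (Q $$ (0,0) \<cdot>\<^sub>m 1\<^sub>m n)" "s < dim_col (Q $$ (0,0) \<cdot>\<^sub>m 1\<^sub>m n)"
  then have r: "r < n" and s: "s < n" by auto
  have n0: "0 < n" using n by simp
  show "Q $$ (r,s) = (Q $$ (0,0) \<cdot>\<^sub>m 1\<^sub>m n) $$ (r,s)"
  proof (cases "r = s")
    case True
    have "(Q * E n 0 r) $$ (0,r) = (E n 0 r * Q) $$ (0,r)" using comm[OF E_carrier] by simp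
    then have "Q $$ (0,0) = Q $$ (r,r)"
      using QE_index[OF Q n0 n0 r] EQ_index[OF Q r n0 r] by simp
    then show ?thesis using True r by simp
  next
    case False
    have "(Q * E n s s) $$ (r,s) = (E n s s * Q) $$ (r,s)" using comm[OF E_carrier] by simp
    then have "Q $$ (r,s) = 0"
      using QE_index[OF Q s r s] EQ_index[OF Q s r s] False by simp
    then show ?thesis using False r s by simp
  qed
qed (use Q in auto)

lemma smult_mult_smult:
  assumes X: "X \<in> carrier_mat n n" and Y: "Y \<in> carrier_mat n n"
  shows "(a \<cdot>\<^sub>m X) * (b \<cdot>\<^sub>m Y) = (a * b :: complex) \<cdot>\<^sub>m (X * Y)"
proof (rule eq_matI)
  fix i j assume "i < dim_row ((a * b) \<cdot>\<^sub>m (X * Y))" "j < dim_col ((a * b) \<cdot>\<^sub>m (X * Y))"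
  then have i: "i < n" and j: "j < n" using X Y by auto
  have "((a \<cdot>\<^sub>m X) * (b \<cdot>\<^sub>m Y)) $$ (i,j) = (\<Sum>k<n. (a \<cdot>\<^sub>m X) $$ (i,k) * (b \<cdot>\<^sub>m Y) $$ (k,j))"
    by (rule mult_index) (use X Y i j in auto)
  also have "\<dots> = (\<Sum>k<n. (a * b) * (X $$ (i,k) * Y $$ (k,j)))"
    using X Y i j by (intro sum.cong refl) auto
  also have "\<dots> = ((a * b) \<cdot>\<^sub>m (X * Y)) $$ (i,j)"
    using X Y i j mult_index[OF X Y i j] by (simp add: sum_distrib_left)
  finally show "((a \<cdot>\<^sub>m X) * (b \<cdot>\<^sub>m Y)) $$ (i,j) = ((a * b) \<cdot>\<^sub>m (X * Y)) $$ (i,j)" .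
qed (use X Y in auto)

lemma mat_tr_smult: "X \<in> carrier_mat n n \<Longrightarrow> mat_tr (k \<cdot>\<^sub>m X) = k * mat_tr X"
  unfolding mat_tr_def by (auto simp: sum_distrib_left intro!: sum.cong)

lemma smult_one_mat'[simp]: "(1::complex) \<cdot>\<^sub>m X = X"
  by (rule eq_matI) auto

lemma mat_tr_conj:
  assumes "W \<in> carrier_mat n n" "M \<in> carrier_mat n n" "Minv \<in> carrier_mat n n" "M * Minv = 1\<^sub>m n"
  shows "mat_tr (Minv * W * M) = mat_tr W"
proof -
  have "mat_tr (Minv * W * M) = mat_tr (M * (Minv * W))"
    by (rule mat_tr_comm) (use assms in auto)
  also have "M * (Minv * W) = (M * Minv) * W" by (rule assoc_mult_mat[symmetric]) (use assms in auto)
  also have "\<dots> = W" using assms by simp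
  finally show ?thesis .
qed

lemma word_conj:
  assumes A: "\<forall>i<N. A i \<in> carrier_mat n n" and At: "\<forall>i<N. At i \<in> carrier_mat n n"
    and M: "M \<in> carrier_mat n n" and Minv: "Minv \<in> carrier_mat n n"
    and inv1: "Minv * M = 1\<^sub>m n" and inv2: "M * Minv = 1\<^sub>m n"
    and rel: "\<forall>i<N. A i = z \<cdot>\<^sub>m (Minv * At i * M)"
    and w: "set w \<subseteq> {..<N}"
  shows "word_prod n A w = z ^ length w \<cdot>\<^sub>m (Minv * word_prod n At w * M)"
  using w
proof (induct w)
  case Nil
  then show ?case using inv1 Minv M by simp
next
  case (Cons i w)
  then have i: "i < N" and ws: "set w \<subseteq> {..<N}" by auto
  have Ati: "At i \<in> carrier_mat n n" using At i by blast
  have W: "word_prod n At w \<in> carrier_mat n n" using word_prod_carrier[OF At ws] .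
  have "word_prod n A (i # w) = (z \<cdot>\<^sub>m (Minv * At i * M)) * (z ^ length w \<cdot>\<^sub>m (Minv * word_prod n At w * M))"
    using Cons(1)[OF ws] rel i by simp
  also have "\<dots> = (z * z ^ length w) \<cdot>\<^sub>m ((Minv * At i * M) * (Minv * word_prod n At w * M))"
    by (rule smult_mult_smult) (use Ati W M Minv in auto)
  also have "(Minv * At i * M) * (Minv * word_prod n At w * M) = Minv * (At i * word_prod n At w) * M"
  proof -
    have "(Minv * At i * M) * (Minv * word_prod n At w * M) = Minv * At i * (M * Minv) * word_prod n At w * M"
      using Ati W M Minv by (simp add: assoc_mult_mat[of _ n n _ n _ n])
    also have "\<dots> = Minv * (At i * word_prod n At w) * M"
      using Ati W M Minv inv2 by (simp add: assoc_mult_mat[of _ n n _ n _ n])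
    finally show ?thesis .
  qed
  finally show ?case by simp
qed

lemma tr_lc_scaled:
  assumes B: "\<forall>i<N. B i \<in> carrier_mat n n" and C: "\<forall>i<N. C i \<in> carrier_mat n n"
    and k: "\<forall>w\<in>Wd N m. mat_tr (word_prod n C w) = \<kappa> * mat_tr (word_prod n B w)"
  shows "mat_tr (lc n N C m c) = \<kappa> * mat_tr (lc n N B m c)"
  unfolding tr_lc[OF C] tr_lc[OF B] using k by (simp add: sum_distrib_left mult.left_commute)

lemma mat_tr_one: "mat_tr (1\<^sub>m n) = of_nat n"
  unfolding mat_tr_def by simp

lemma norm_pow_one: "cmod z ^ m = 1 \<Longrightarrow> m \<ge> 1 \<Longrightarrow> cmod z = 1"
  using power_eq_iff_eq_base[of m "cmod z" 1] by simp

lemma lc_zero: "lc n N B m (\<lambda>_. 0) = 0\<^sub>m n n"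
  unfolding lc_def by (rule eq_matI) auto

lemma mv_index:
  assumes "M \<in> carrier_mat n n" "x \<in> carrier_vec n" "a < n"
  shows "(M *\<^sub>v x) $ a = (\<Sum>q<n. M $$ (a,q) * x $ q)"
  using assms by (simp add: scalar_prod_def atLeast0LessThan)

lemma smult_smult_mat: "a \<cdot>\<^sub>m (b \<cdot>\<^sub>m X) = (a * b :: complex) \<cdot>\<^sub>m X"
  by (rule eq_matI) auto

lemma lcS_smultF: "lcS n W c (\<lambda>w. k \<cdot>\<^sub>m F w) = k \<cdot>\<^sub>m lcS n W c F" if "\<forall>w\<in>W. F w \<in> carrier_mat n n"
  using that by (intro eq_matI) (auto simp: sum_distrib_left mult_ac intro!: sum.cong)

locale fwd =
  fixes n N :: nat and A At :: "nat \<Rightarrow> complex mat" and P :: "nat \<Rightarrow> bool" and l :: nat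
  assumes A: "\<forall>i<N. A i \<in> carrier_mat n n" and At: "\<forall>i<N. At i \<in> carrier_mat n n"
    and n1: "n \<ge> 1" and l1: "l \<ge> 1"
    and spA: "\<And>m. m \<ge> l \<Longrightarrow> spans n N A m" and spAt: "\<And>m. m \<ge> l \<Longrightarrow> spans n N At m"
    and th: "TH n N At A P" and Pcov: "\<And>m. m \<ge> 1 \<Longrightarrow> P m \<or> P (Suc m)"
begin

abbreviation "R \<equiv> Rel n N At A"

lemma Rfun: "R m X Y \<Longrightarrow> R m X Y' \<Longrightarrow> Y = Y'"
proof -
  assume R1: "R m X Y" and R2: "R m X Y'"
  from Pcov[of "l+m"] l1 have "P (l + m) \<or> P (Suc l + m)" by simp
  then show "Y = Y'"
  proof
    assume "P (l + m)"
    from Rel_fun[OF At A th spA[of l] this R1 R2] show ?thesis by simp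
  next
    assume "P (Suc l + m)"
    from Rel_fun[OF At A th spA[of "Suc l"] this R1 R2] show ?thesis by simp
  qed
qed

lemma Rfunr: "R m X Y \<Longrightarrow> R m X' Y \<Longrightarrow> X = X'"
proof -
  assume R1: "R m X Y" and R2: "R m X' Y"
  note R1 = Rel_sym[OF R1] and R2 = Rel_sym[OF R2]
  note th' = TH_sym[OF th]
  from Pcov[of "l+m"] l1 have "P (l + m) \<or> P (Suc l + m)" by simp
  then show "X = X'"
  proof
    assume "P (l + m)"
    from Rel_fun[OF A At th' spAt[of l] this R1 R2] show ?thesis by simp
  next
    assume "P (Suc l + m)"
    from Rel_fun[OF A At th' spAt[of "Suc l"] this R1 R2] show ?thesis by simp
  qed
qed

lemma tot: "m \<ge> l \<Longrightarrow> X \<in> carrier_mat n n \<Longrightarrow> \<exists>Y. R m X Y"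
  using spAt unfolding spans_def Rel_def by blast

lemma sur: "m \<ge> l \<Longrightarrow> Y \<in> carrier_mat n n \<Longrightarrow> \<exists>X. R m X Y"
  using spA unfolding spans_def Rel_def by blast

definition phi where "phi m X = (SOME Y. R m X Y)"

lemma phi: "m \<ge> l \<Longrightarrow> X \<in> carrier_mat n n \<Longrightarrow> R m X (phi m X)"
  unfolding phi_def using tot by (metis someI_ex)

lemma phi_eq: "R m X Y \<Longrightarrow> phi m X = Y"
  unfolding phi_def using Rfun by (metis someI_ex)

lemma scal: "\<exists>z. z \<noteq> 0 \<and> (\<forall>X\<in>carrier_mat n n. phi (l+1) X = z \<cdot>\<^sub>m phi l X)"
proof -
  obtain Y0 where Y0: "R l Y0 (1\<^sub>m n)" using sur[of l "1\<^sub>m n"] by auto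
  define H where "H = phi (l+1) Y0"
  have Y0c: "Y0 \<in> carrier_mat n n" using Rel_carrier[OF Y0] by blast
  have RH: "R (l+1) Y0 H" unfolding H_def by (rule phi[OF _ Y0c]) simp
  have Hc: "H \<in> carrier_mat n n" using Rel_carrier[OF RH] by blast
  have eq1: "phi (l+1) X = phi l X * H \<and> phi (l+1) X = H * phi l X" if X: "X \<in> carrier_mat n n" for X
  proof -
    have R1: "R l X (phi l X)" by (rule phi[OF _ X]) simp
    have R2: "R (l+1) X (phi (l+1) X)" by (rule phi[OF _ X]) simp
    have c1: "phi l X \<in> carrier_mat n n" "phi (l+1) X \<in> carrier_mat n n"
      using Rel_carrier[OF R1] Rel_carrier[OF R2] by auto
    have e: "l + 1 + l = l + (l + 1)" by simp
    have a1: "R (l+(l+1)) (X * Y0) (phi (l+1) X * 1\<^sub>m n)"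
      using Rel_mult[OF At A R2 Y0] e by simp
    have a2: "R (l+(l+1)) (X * Y0) (phi l X * H)"
      using Rel_mult[OF At A R1 RH] .
    have b1: "R (l+(l+1)) (Y0 * X) (1\<^sub>m n * phi (l+1) X)"
      using Rel_mult[OF At A Y0 R2] .
    have b2: "R (l+(l+1)) (Y0 * X) (H * phi l X)"
      using Rel_mult[OF At A RH R1] e by simp
    from Rfun[OF a1 a2] Rfun[OF b1 b2] c1 show ?thesis by simp
  qed
  have comm: "H * Z = Z * H" if Z: "Z \<in> carrier_mat n n" for Z
  proof -
    obtain X where X: "R l X Z" using sur[OF _ Z] by auto
    have Xc: "X \<in> carrier_mat n n" using Rel_carrier[OF X] by blast
    have "phi l X = Z" by (rule phi_eq[OF X])
    with eq1[OF Xc] show ?thesis by metis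
  qed
  define z where "z = H $$ (0,0)"
  have Hz: "H = z \<cdot>\<^sub>m 1\<^sub>m n" unfolding z_def by (rule commute_scalar[OF n1 Hc comm])
  have key: "phi (l+1) X = z \<cdot>\<^sub>m phi l X" if X: "X \<in> carrier_mat n n" for X
  proof -
    have R1: "R l X (phi l X)" by (rule phi[OF _ X]) simp
    have c1: "phi l X \<in> carrier_mat n n" using Rel_carrier[OF R1] by auto
    have "phi (l+1) X = (z \<cdot>\<^sub>m 1\<^sub>m n) * phi l X" using eq1[OF X] Hz by metis
    also have "\<dots> = z \<cdot>\<^sub>m phi l X" using c1 by (simp add: mult_smult_assoc_mat[of _ n n])
    finally show ?thesis .
  qed
  have "z \<noteq> 0"
  proof
    assume z0: "z = 0"
    obtain X1 where X1: "R (l+1) X1 (1\<^sub>m n)" using sur[of "l+1" "1\<^sub>m n"] by auto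
    have X1c: "X1 \<in> carrier_mat n n" using Rel_carrier[OF X1] by blast
    have R1: "R l X1 (phi l X1)" by (rule phi[OF _ X1c]) simp
    have c1: "phi l X1 \<in> carrier_mat n n" using Rel_carrier[OF R1] by auto
    have "1\<^sub>m n = z \<cdot>\<^sub>m phi l X1" using key[OF X1c] phi_eq[OF X1] by simp
    then have "(1\<^sub>m n :: complex mat) $$ (0,0) = (z \<cdot>\<^sub>m phi l X1) $$ (0,0)" by simp
    then show False using z0 n1 c1 by simp
  qed
  with key show ?thesis by blast
qed


definition zz where "zz = (SOME z. z \<noteq> 0 \<and> (\<forall>X\<in>carrier_mat n n. phi (l+1) X = z \<cdot>\<^sub>m phi l X))"

lemma zz: "zz \<noteq> 0 \<and> (\<forall>X\<in>carrier_mat n n. phi (l+1) X = zz \<cdot>\<^sub>m phi l X)"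
  unfolding zz_def by (rule someI_ex[OF scal])

lemma zz_rel: "R (l+1) X Y \<Longrightarrow> R l X Y' \<Longrightarrow> Y = zz \<cdot>\<^sub>m Y'"
  using zz phi_eq Rel_carrier by metis

lemma E00: "\<exists>a t. a < n \<and> t < n \<and> phi l (E n 0 0) $$ (a,t) \<noteq> 0"
proof (rule ccontr)
  assume "\<not> ?thesis"
  then have h: "\<And>a t. a < n \<Longrightarrow> t < n \<Longrightarrow> phi l (E n 0 0) $$ (a,t) = 0" by blast
  have R1: "R l (E n 0 0) (phi l (E n 0 0))" by (rule phi) auto
  have c1: "phi l (E n 0 0) \<in> carrier_mat n n" using Rel_carrier[OF R1] by blast
  have "phi l (E n 0 0) = 0\<^sub>m n n" by (rule eq_matI) (use h c1 in auto)
  with R1 have R1': "R l (E n 0 0) (0\<^sub>m n n)" by simp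
  have R0: "R l (0\<^sub>m n n) (0\<^sub>m n n)" unfolding Rel_def using lc_zero by metis
  have "E n 0 0 = 0\<^sub>m n n" by (rule Rfunr[OF R1' R0])
  then have "E n 0 0 $$ (0,0) = (0\<^sub>m n n :: complex mat) $$ (0,0)" by simp
  then show False using n1 by (simp add: E_def)
qed

definition cs where "cs s = (SOME c. E n s 0 = lc n N At l c)"

lemma cs: "E n s 0 = lc n N At l (cs s)"
proof -
  have "\<exists>c. E n s 0 = lc n N At l c" using spAt[of l, unfolded spans_def, rule_format, OF _ E_carrier] by simp
  then show ?thesis unfolding cs_def by (rule someI_ex)
qed

lemma Rcs: "R l (E n s 0) (lc n N A l (cs s))"
  unfolding Rel_def using cs by blast

context
  fixes a t :: nat
  assumes at: "a < n" "t < n" "phi l (E n 0 0) $$ (a,t) \<noteq> 0"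
begin

definition S where "S = mat n n (\<lambda>(r,s). lc n N A l (cs s) $$ (r,t))"

lemma S_carrier[simp]: "S \<in> carrier_mat n n"
  and S_dim[simp]: "dim_row S = n" "dim_col S = n"
  unfolding S_def by simp_all

lemma S_index: "r < n \<Longrightarrow> s < n \<Longrightarrow> S $$ (r,s) = lc n N A l (cs s) $$ (r,t)"
  unfolding S_def by simp

lemma AS: assumes i: "i < N" shows "A i * S = zz \<cdot>\<^sub>m (S * At i)"
proof (rule eq_matI)
  have Ai: "A i \<in> carrier_mat n n" and Ati: "At i \<in> carrier_mat n n" using A At i by auto
  fix r s assume "r < dim_row (zz \<cdot>\<^sub>m (S * At i))" "s < dim_col (zz \<cdot>\<^sub>m (S * At i))"
  then have r: "r < n" and s: "s < n" using Ati by auto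
  define d where "d = (\<lambda>w. \<Sum>k\<in>{..<n}. At i $$ (k,s) * cs k w)"
  have L1: "lcS n {..<n} (\<lambda>k. At i $$ (k,s)) (\<lambda>k. lc n N B l (cs k)) = lc n N B l d" for B
    unfolding lc_def d_def by (rule lcS_lcS) auto
  have L2: "lcS n {..<n} (\<lambda>k. At i $$ (k,s)) (\<lambda>k. lc n N At l (cs k)) = At i * E n s 0"
  proof -
    have "lcS n {..<n} (\<lambda>k. At i $$ (k,s)) (\<lambda>k. lc n N At l (cs k)) = lcS n {..<n} (\<lambda>k. At i $$ (k,s)) (\<lambda>k. E n k 0)"
      by (rule lcS_cong[OF refl]) (simp add: cs)
    also have "\<dots> = At i * E n s 0"
    proof (rule eq_matI)
      fix p q assume "p < dim_row (At i * E n s 0)" "q < dim_col (At i * E n s 0)"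
      then have p: "p < n" and q: "q < n" using Ati by auto
      have "lcS n {..<n} (\<lambda>k. At i $$ (k,s)) (\<lambda>k. E n k 0) $$ (p,q)
          = (\<Sum>k<n. At i $$ (k,s) * E n k 0 $$ (p,q))" using p q by simp
      also have "\<dots> = (\<Sum>k<n. if k = p then (if q = 0 then At i $$ (k,s) else 0) else 0)"
        using p q by (intro sum.cong refl) (auto simp: E_def)
      also have "\<dots> = (if q = 0 then At i $$ (p,s) else 0)" using p by simp
      also have "\<dots> = (At i * E n s 0) $$ (p,q)" using QE_index[OF Ati s p q] by simp
      finally show "lcS n {..<n} (\<lambda>k. At i $$ (k,s)) (\<lambda>k. E n k 0) $$ (p,q) = (At i * E n s 0) $$ (p,q)" .
    qed (use Ati in auto)
    finally show ?thesis .
  qed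
  have R1: "R l (At i * E n s 0) (lc n N A l d)"
    unfolding Rel_def using L1[of At] L2 by metis
  have wi: "[i] \<in> Wd N 1" using i by (auto simp: Wd_def)
  have Rw: "R 1 (At i) (A i)" using Rel_word[OF At A wi] Ai Ati by simp
  have R2: "R (l+1) (At i * E n s 0) (A i * lc n N A l (cs s))"
    using Rel_mult[OF At A Rw Rcs[of s]] by (simp add: add.commute)
  have key: "A i * lc n N A l (cs s) = zz \<cdot>\<^sub>m lc n N A l d" by (rule zz_rel[OF R2 R1])
  have "(A i * S) $$ (r,s) = (\<Sum>k<n. A i $$ (r,k) * S $$ (k,s))" by (rule mult_index[OF Ai S_carrier r s])
  also have "\<dots> = (\<Sum>k<n. A i $$ (r,k) * lc n N A l (cs s) $$ (k,t))"
    using s by (intro sum.cong refl) (simp add: S_index)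
  also have "\<dots> = (A i * lc n N A l (cs s)) $$ (r,t)" by (rule mult_index[symmetric, OF Ai lc_carrier r at(2)])
  also have "\<dots> = zz * lc n N A l d $$ (r,t)" unfolding key using r at(2) by simp
  also have "lc n N A l d $$ (r,t) = lcS n {..<n} (\<lambda>k. At i $$ (k,s)) (\<lambda>k. lc n N A l (cs k)) $$ (r,t)"
    using L1[of A] by simp
  also have "\<dots> = (\<Sum>k<n. S $$ (r,k) * At i $$ (k,s))"
    using r at(2) by (simp add: S_index mult.commute)
  also have "\<dots> = (S * At i) $$ (r,s)" by (rule mult_index[symmetric, OF S_carrier Ati r s])
  finally show "(A i * S) $$ (r,s) = (zz \<cdot>\<^sub>m (S * At i)) $$ (r,s)" using r s Ati by simp
qed (use A At i in auto)


lemma AS_word: "set w \<subseteq> {..<N} \<Longrightarrow> word_prod n A w * S = zz ^ length w \<cdot>\<^sub>m (S * word_prod n At w)"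
proof (induct w)
  case Nil
  then show ?case by simp
next
  case (Cons i w)
  then have i: "i < N" and ws: "set w \<subseteq> {..<N}" by auto
  have Ai: "A i \<in> carrier_mat n n" and Ati: "At i \<in> carrier_mat n n" using A At i by auto
  have W: "word_prod n A w \<in> carrier_mat n n" and Wt: "word_prod n At w \<in> carrier_mat n n"
    using word_prod_carrier[OF A ws] word_prod_carrier[OF At ws] by auto
  have "word_prod n A (i # w) * S = A i * (word_prod n A w * S)"
    using Ai W by (simp add: assoc_mult_mat[of _ n n _ n _ n])
  also have "\<dots> = A i * (zz ^ length w \<cdot>\<^sub>m (S * word_prod n At w))" using Cons(1)[OF ws] by simp
  also have "\<dots> = zz ^ length w \<cdot>\<^sub>m (A i * (S * word_prod n At w))"
    by (rule mult_smult_distrib) (use Ai Wt in auto)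
  also have "A i * (S * word_prod n At w) = (A i * S) * word_prod n At w"
    using Ai Wt by (simp add: assoc_mult_mat[of _ n n _ n _ n])
  also have "\<dots> = (zz \<cdot>\<^sub>m (S * At i)) * word_prod n At w" using AS[OF i] by simp
  also have "\<dots> = zz \<cdot>\<^sub>m (S * At i * word_prod n At w)"
    by (rule mult_smult_assoc_mat) (use Ati Wt in auto)
  also have "S * At i * word_prod n At w = S * word_prod n At (i # w)"
    using Ati Wt by (simp add: assoc_mult_mat[of _ n n _ n _ n])
  finally show ?case by (simp add: smult_smult_mat mult.commute)
qed

lemma S_inj:
  assumes x: "x \<in> carrier_vec n" and Sx: "S *\<^sub>v x = 0\<^sub>v n"
  shows "x = 0\<^sub>v n"
proof (rule ccontr)
  assume "x \<noteq> 0\<^sub>v n"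
  then obtain j where j: "j < n" "x $ j \<noteq> 0" using x by (metis eq_vecI carrier_vecD index_zero_vec)
  obtain c where c: "E n 0 j = lc n N At l c"
    using spAt[of l, unfolded spans_def, rule_format, OF _ E_carrier] by blast
  have Wt: "\<forall>w\<in>Wd N l. word_prod n At w \<in> carrier_mat n n" and Wa: "\<forall>w\<in>Wd N l. word_prod n A w \<in> carrier_mat n n"
    using Wd_word_carrier[OF At] Wd_word_carrier[OF A] by auto
  have 1: "S * E n 0 j = lcS n (Wd N l) c (\<lambda>w. S * word_prod n At w)"
    unfolding c lc_def by (rule lcS_mult_left[OF S_carrier Wt finite_Wd])
  have "lc n N A l c * S = lcS n (Wd N l) c (\<lambda>w. word_prod n A w * S)"
    unfolding lc_def by (rule lcS_mult_right[OF S_carrier Wa finite_Wd])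
  also have "\<dots> = lcS n (Wd N l) c (\<lambda>w. zz ^ l \<cdot>\<^sub>m (S * word_prod n At w))"
    by (rule lcS_cong[OF refl]) (auto simp: AS_word Wd_def)
  also have "\<dots> = zz ^ l \<cdot>\<^sub>m (S * E n 0 j)" unfolding 1 by (rule lcS_smultF) (use Wt in \<open>auto intro!: mult_carrier_mat[OF S_carrier]\<close>)
  finally have 2: "lc n N A l c * S = zz ^ l \<cdot>\<^sub>m (S * E n 0 j)" .
  have 3: "(lc n N A l c * S) *\<^sub>v x = 0\<^sub>v n"
  proof -
    have "(lc n N A l c * S) *\<^sub>v x = lc n N A l c *\<^sub>v (S *\<^sub>v x)"
      by (rule assoc_mult_mat_vec[OF lc_carrier S_carrier x])
    also have "\<dots> = 0\<^sub>v n" unfolding Sx by (rule eq_vecI) (auto simp: mv_index)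
    finally show ?thesis .
  qed
  have "S $$ (a,0) = 0"
  proof -
    have "((zz ^ l \<cdot>\<^sub>m (S * E n 0 j)) *\<^sub>v x) $ a = 0" using 2 3 at(1) by simp
    moreover have "((zz ^ l \<cdot>\<^sub>m (S * E n 0 j)) *\<^sub>v x) $ a = (\<Sum>q<n. (zz ^ l \<cdot>\<^sub>m (S * E n 0 j)) $$ (a,q) * x $ q)"
      by (rule mv_index) (use x at(1) in auto)
    moreover have "\<dots> = (\<Sum>q<n. if q = j then zz ^ l * S $$ (a,0) * x $ j else 0)"
    proof (intro sum.cong refl)
      fix q assume q: "q \<in> {..<n}"
      have n0: "0 < n" using n1 by simp
      have "(S * E n 0 j) $$ (a,q) = (if q = j then S $$ (a,0) else 0)"
        using QE_index[OF S_carrier n0 at(1)] q by simp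
      moreover have "(zz ^ l \<cdot>\<^sub>m (S * E n 0 j)) $$ (a,q) = zz ^ l * (S * E n 0 j) $$ (a,q)"
        using q at(1) by (simp del: index_mult_mat(1))
      ultimately show "(zz ^ l \<cdot>\<^sub>m (S * E n 0 j)) $$ (a,q) * x $ q = (if q = j then zz ^ l * S $$ (a,0) * x $ j else 0)"
        by simp
    qed
    moreover have "\<dots> = zz ^ l * S $$ (a,0) * x $ j" using j by simp
    ultimately show ?thesis using zz j by simp
  qed
  moreover have "S $$ (a,0) = phi l (E n 0 0) $$ (a,t)"
    using S_index[OF at(1)] n1 phi_eq[OF Rcs[of 0]] by simp
  ultimately show False using at(3) by simp
qed

lemma S_inv: "\<exists>T. T \<in> carrier_mat n n \<and> T * S = 1\<^sub>m n \<and> S * T = 1\<^sub>m n"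
proof -
  have "det S \<noteq> 0" using det_0_iff_vec_prod_zero_field[OF S_carrier] S_inj by blast
  from det_non_zero_imp_unit[OF S_carrier this, of "()"]
  show ?thesis unfolding Units_def by (simp add: ring_mat_simps) blast
qed


lemma main_at: "\<exists>M Minv z. M \<in> carrier_mat n n \<and> Minv \<in> carrier_mat n n \<and>
          inverts_mat M Minv \<and> inverts_mat Minv M \<and> cmod z = 1 \<and>
          (\<forall>i<N. A i = z \<cdot>\<^sub>m (Minv * At i * M))"
proof -
  obtain T where T: "T \<in> carrier_mat n n" and TS: "T * S = 1\<^sub>m n" and ST: "S * T = 1\<^sub>m n"
    using S_inv by blast
  have rel: "\<forall>i<N. A i = zz \<cdot>\<^sub>m (S * At i * T)"
  proof (intro allI impI)
    fix i assume i: "i < N"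
    have Ai: "A i \<in> carrier_mat n n" and Ati: "At i \<in> carrier_mat n n" using A At i by auto
    have "A i = A i * (S * T)" using Ai ST by simp
    also have "\<dots> = (A i * S) * T" using Ai T by (simp add: assoc_mult_mat[of _ n n _ n _ n])
    also have "\<dots> = (zz \<cdot>\<^sub>m (S * At i)) * T" using AS[OF i] by simp
    also have "\<dots> = zz \<cdot>\<^sub>m (S * At i * T)" by (rule mult_smult_assoc_mat) (use Ati T in auto)
    finally show "A i = zz \<cdot>\<^sub>m (S * At i * T)" .
  qed
  have cz: "cmod zz = 1"
  proof -
    from Pcov[OF l1] obtain m where m: "m \<ge> l" "m \<ge> 1" "P m"
      using l1 by (metis le_SucI order_refl)
    obtain \<kappa> where k: "cmod \<kappa> = 1" "\<forall>w\<in>Wd N m. mat_tr (word_prod n A w) = \<kappa> * mat_tr (word_prod n At w)"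
      using th m(3) unfolding TH_def by blast
    obtain c where c: "1\<^sub>m n = lc n N At m c"
      using spAt[OF m(1), unfolded spans_def, rule_format, OF one_carrier_mat] by blast
    have wz: "\<forall>w\<in>Wd N m. mat_tr (word_prod n A w) = zz ^ m * mat_tr (word_prod n At w)"
    proof
      fix w assume w: "w \<in> Wd N m"
      then have ws: "set w \<subseteq> {..<N}" and lw: "length w = m" by (auto simp: Wd_def)
      have W: "word_prod n At w \<in> carrier_mat n n" using word_prod_carrier[OF At ws] .
      have "word_prod n A w = zz ^ m \<cdot>\<^sub>m (S * word_prod n At w * T)"
        using word_conj[OF A At T S_carrier ST TS rel ws] lw by simp
      moreover have "S * word_prod n At w * T \<in> carrier_mat n n"
        by (rule mult_carrier_mat[OF mult_carrier_mat[OF S_carrier W] T])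
      ultimately show "mat_tr (word_prod n A w) = zz ^ m * mat_tr (word_prod n At w)"
        using mat_tr_smult[of "S * word_prod n At w * T" n] mat_tr_conj[OF W T S_carrier TS] W T by simp
    qed
    have "mat_tr (lc n N A m c) = \<kappa> * of_nat n"
      using tr_lc_scaled[OF At A k(2)] c mat_tr_one by metis
    moreover have "mat_tr (lc n N A m c) = zz ^ m * of_nat n"
      using tr_lc_scaled[OF At A wz] c mat_tr_one by metis
    ultimately have "zz ^ m = \<kappa>" using n1 by simp
    then have "cmod zz ^ m = 1" using k(1) by (metis norm_power)
    then show ?thesis using m(2) by (rule norm_pow_one)
  qed
  show ?thesis
    by (rule exI[of _ T], rule exI[of _ S], rule exI[of _ zz])
      (use T TS ST cz rel in \<open>auto simp: inverts_mat_def\<close>)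
qed

end


lemma main: "\<exists>M Minv z. M \<in> carrier_mat n n \<and> Minv \<in> carrier_mat n n \<and>
          inverts_mat M Minv \<and> inverts_mat Minv M \<and> cmod z = 1 \<and>
          (\<forall>i<N. A i = z \<cdot>\<^sub>m (Minv * At i * M))"
  using E00 main_at by blast

end


lemma tr_word_conj:
  assumes A: "\<forall>i<N. A i \<in> carrier_mat n n" and At: "\<forall>i<N. At i \<in> carrier_mat n n"
    and M: "M \<in> carrier_mat n n" and Minv: "Minv \<in> carrier_mat n n"
    and inv1: "Minv * M = 1\<^sub>m n" and inv2: "M * Minv = 1\<^sub>m n"
    and rel: "\<forall>i<N. A i = z \<cdot>\<^sub>m (Minv * At i * M)"
    and w: "set w \<subseteq> {..<N}"
  shows "mat_tr (word_prod n A w) = z ^ length w * mat_tr (word_prod n At w)"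
proof -
  have W: "word_prod n At w \<in> carrier_mat n n" using word_prod_carrier[OF At w] .
  have c: "Minv * word_prod n At w * M \<in> carrier_mat n n"
    by (rule mult_carrier_mat[OF mult_carrier_mat[OF Minv W] M])
  show ?thesis
    using word_conj[OF A At M Minv inv1 inv2 rel w] mat_tr_smult[OF c] mat_tr_conj[OF W M Minv inv2] by simp
qed

lemma bwd:
  assumes A: "\<forall>i<N. A i \<in> carrier_mat n n" and At: "\<forall>i<N. At i \<in> carrier_mat n n"
    and M: "M \<in> carrier_mat n n" and Minv: "Minv \<in> carrier_mat n n"
    and i1: "inverts_mat M Minv" and i2: "inverts_mat Minv M" and z: "cmod z = 1"
    and rel: "\<forall>i<N. A i = z \<cdot>\<^sub>m (Minv * At i * M)"
  shows "\<exists>\<alpha>::real. \<forall>w. length w = L \<and> set w \<subseteq> {..<N} \<longrightarrow>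
            mat_tr (word_prod n A w) = exp (\<i> * complex_of_real \<alpha>) * mat_tr (word_prod n At w)"
proof -
  have inv1: "Minv * M = 1\<^sub>m n" and inv2: "M * Minv = 1\<^sub>m n"
    using i1 i2 M Minv unfolding inverts_mat_def by auto
  have "cmod (z ^ L) = 1" using z by (simp add: norm_power)
  then obtain \<alpha> where "z ^ L = exp (\<i> * complex_of_real \<alpha>)" using unimod_exp by blast
  then show ?thesis using tr_word_conj[OF A At M Minv inv1 inv2 rel] by metis
qed

lemma comm_words:
  assumes B: "\<forall>i<N. B i \<in> carrier_mat n n" and Q: "Q \<in> carrier_mat n n"
    and comm: "\<forall>i<N. B i * Q = Q * B i" and w: "set w \<subseteq> {..<N}"
  shows "word_prod n B w * Q = Q * word_prod n B w"
  using w
proof (induct w)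
  case (Cons i w)
  then have i: "i < N" and ws: "set w \<subseteq> {..<N}" by auto
  have Bi: "B i \<in> carrier_mat n n" using B i by auto
  have W: "word_prod n B w \<in> carrier_mat n n" using word_prod_carrier[OF B ws] .
  have "word_prod n B (i # w) * Q = B i * (word_prod n B w * Q)"
    using Bi W Q by (simp add: assoc_mult_mat[of _ n n _ n _ n])
  also have "\<dots> = (B i * Q) * word_prod n B w"
    using Bi W Q Cons(1)[OF ws] by (simp add: assoc_mult_mat[of _ n n _ n _ n])
  also have "\<dots> = Q * word_prod n B (i # w)"
    using Bi W Q comm i by (simp add: assoc_mult_mat[of _ n n _ n _ n])
  finally show ?case .
qed (use Q in simp)

lemma comm_span:
  assumes B: "\<forall>i<N. B i \<in> carrier_mat n n" and Q: "Q \<in> carrier_mat n n"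
    and comm: "\<forall>i<N. B i * Q = Q * B i" and sp: "spans n N B l" and X: "X \<in> carrier_mat n n"
  shows "Q * X = X * Q"
proof -
  obtain c where c: "X = lc n N B l c" using sp X unfolding spans_def by blast
  have Wc: "\<forall>w\<in>Wd N l. word_prod n B w \<in> carrier_mat n n" using Wd_word_carrier[OF B] by blast
  have "Q * X = lcS n (Wd N l) c (\<lambda>w. Q * word_prod n B w)"
    unfolding c lc_def by (rule lcS_mult_left[OF Q Wc finite_Wd])
  also have "\<dots> = lcS n (Wd N l) c (\<lambda>w. word_prod n B w * Q)"
    by (rule lcS_cong[OF refl]) (use comm_words[OF B Q comm] in \<open>auto simp: Wd_def\<close>)
  also have "\<dots> = X * Q"
    unfolding c lc_def by (rule lcS_mult_right[symmetric, OF Q Wc finite_Wd])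
  finally show ?thesis .
qed


lemma pow_eq_spans:
  assumes A: "\<forall>i<N. A i \<in> carrier_mat n n" and At: "\<forall>i<N. At i \<in> carrier_mat n n"
    and n1: "n \<ge> 1" and sp: "spans n N At m"
    and M: "M \<in> carrier_mat n n" and Minv: "Minv \<in> carrier_mat n n"
    and inv1: "Minv * M = 1\<^sub>m n" and inv2: "M * Minv = 1\<^sub>m n"
    and rel: "\<forall>i<N. A i = z \<cdot>\<^sub>m (Minv * At i * M)"
  shows "mat_tr (lc n N A m c) = z ^ m * mat_tr (lc n N At m c)"
proof -
  have "\<forall>w\<in>Wd N m. mat_tr (word_prod n A w) = z ^ m * mat_tr (word_prod n At w)"
    using tr_word_conj[OF A At M Minv inv1 inv2 rel] by (auto simp: Wd_def)
  then show ?thesis by (rule tr_lc_scaled[OF At A])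
qed

lemma uniq:
  assumes A: "\<forall>i<N. A i \<in> carrier_mat n n" and At: "\<forall>i<N. At i \<in> carrier_mat n n"
    and n1: "n \<ge> 1" and sp0: "spans n N At l" and sp1: "spans n N At (Suc l)"
    and M: "M \<in> carrier_mat n n" and Minv: "Minv \<in> carrier_mat n n"
    and i1: "inverts_mat M Minv" and i2: "inverts_mat Minv M" and z: "cmod z = 1"
    and rel: "\<forall>i<N. A i = z \<cdot>\<^sub>m (Minv * At i * M)"
    and M': "M' \<in> carrier_mat n n" and Minv': "Minv' \<in> carrier_mat n n"
    and i1': "inverts_mat M' Minv'" and i2': "inverts_mat Minv' M'" and z': "cmod z' = 1"
    and rel': "\<forall>i<N. A i = z' \<cdot>\<^sub>m (Minv' * At i * M')"
  shows "z' = z \<and> (\<exists>c::complex. c \<noteq> 0 \<and> M' = c \<cdot>\<^sub>m M)"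
proof -
  have inv1: "Minv * M = 1\<^sub>m n" and inv2: "M * Minv = 1\<^sub>m n"
    using i1 i2 M Minv unfolding inverts_mat_def by auto
  have inv1': "Minv' * M' = 1\<^sub>m n" and inv2': "M' * Minv' = 1\<^sub>m n"
    using i1' i2' M' Minv' unfolding inverts_mat_def by auto
  have pw: "z ^ m = z' ^ m" if sp: "spans n N At m" for m
  proof -
    obtain c where c: "1\<^sub>m n = lc n N At m c"
      using sp[unfolded spans_def, rule_format, OF one_carrier_mat] by blast
    have "z ^ m * of_nat n = mat_tr (lc n N A m c)"
      using pow_eq_spans[OF A At n1 sp M Minv inv1 inv2 rel, of c] c mat_tr_one by metis
    also have "\<dots> = z' ^ m * of_nat n"
      using pow_eq_spans[OF A At n1 sp M' Minv' inv1' inv2' rel', of c] c mat_tr_one by metis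
    finally show ?thesis using n1 by simp
  qed
  have z0: "z \<noteq> 0" using z by auto
  have zz': "z' = z"
  proof -
    have "z * z ^ l = z' * z' ^ l" using pw[OF sp1] by simp
    moreover have "z ^ l = z' ^ l" using pw[OF sp0] .
    moreover have "z ^ l \<noteq> 0" using z0 by simp
    ultimately show ?thesis by auto
  qed
  define Q where "Q = M * Minv'"
  have Qc: "Q \<in> carrier_mat n n" unfolding Q_def using M Minv' by simp
  have canc: "\<And>X. X \<in> carrier_mat n n \<Longrightarrow> M * (Minv * X) = X"
    using inv2 M Minv by (simp add: assoc_mult_mat[symmetric, of _ n n _ n _ n])
  have comm: "\<forall>i<N. At i * Q = Q * At i"
  proof (intro allI impI)
    fix i assume i: "i < N"
    have Ati: "At i \<in> carrier_mat n n" using At i by auto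
    have c1: "Minv * At i * M \<in> carrier_mat n n" using Minv Ati M by (meson mult_carrier_mat)
    have c2: "Minv' * At i * M' \<in> carrier_mat n n" using Minv' Ati M' by (meson mult_carrier_mat)
    have "z \<cdot>\<^sub>m (Minv * At i * M) = z \<cdot>\<^sub>m (Minv' * At i * M')" using rel rel' i zz' by metis
    then have "inverse z \<cdot>\<^sub>m (z \<cdot>\<^sub>m (Minv * At i * M)) = inverse z \<cdot>\<^sub>m (z \<cdot>\<^sub>m (Minv' * At i * M'))" by simp
    then have e: "Minv * At i * M = Minv' * At i * M'" using z0 by (simp add: smult_smult_mat)
    have "At i * Q = M * (Minv * At i * M) * Minv'"
      unfolding Q_def using Ati M Minv Minv' canc by (simp add: assoc_mult_mat[of _ n n _ n _ n])
    also have "\<dots> = M * (Minv' * At i * M') * Minv'" unfolding e ..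
    also have "\<dots> = Q * At i"
      unfolding Q_def using Ati M Minv' M' inv2' by (simp add: assoc_mult_mat[of _ n n _ n _ n])
    finally show "At i * Q = Q * At i" .
  qed
  have Qs: "Q = Q $$ (0,0) \<cdot>\<^sub>m 1\<^sub>m n"
    by (rule commute_scalar[OF n1 Qc]) (rule comm_span[OF At Qc comm sp0])
  define q where "q = Q $$ (0,0)"
  have "M = M * (Minv' * M')" using inv1' M by simp
  also have "\<dots> = Q * M'" unfolding Q_def using M Minv' M' by (simp add: assoc_mult_mat[of _ n n _ n _ n])
  also have "\<dots> = q \<cdot>\<^sub>m M'" using Qs M' unfolding q_def by (metis mult_smult_assoc_mat left_mult_one_mat one_carrier_mat)
  finally have MM: "M = q \<cdot>\<^sub>m M'" .
  have q0: "q \<noteq> 0"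
  proof
    assume "q = 0"
    then have "M = 0\<^sub>m n n" using MM M' by (auto intro!: eq_matI)
    then have "(1\<^sub>m n :: complex mat) = 0\<^sub>m n n" using inv2 Minv by simp
    then have "(1\<^sub>m n :: complex mat) $$ (0,0) = (0\<^sub>m n n :: complex mat) $$ (0,0)" by simp
    then show False using n1 by simp
  qed
  have "inverse q \<cdot>\<^sub>m M = M'" using MM q0 by (simp add: smult_smult_mat)
  then show ?thesis using zz' q0 by (metis inverse_nonzero_iff_nonzero)
qed


lemma hyp_TH:
  assumes h: "\<forall>L::nat. P L \<longrightarrow> (\<exists>\<alpha>::real. \<forall>w. length w = L \<and> set w \<subseteq> {..<N} \<longrightarrow>
            mat_tr (word_prod n A w) = exp (\<i> * complex_of_real \<alpha>) * mat_tr (word_prod n At w))"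
  shows "TH n N At A P"
  unfolding TH_def
proof (intro allI impI)
  fix L assume "P L"
  then obtain \<alpha> :: real where a: "\<forall>w. length w = L \<and> set w \<subseteq> {..<N} \<longrightarrow>
            mat_tr (word_prod n A w) = exp (\<i> * complex_of_real \<alpha>) * mat_tr (word_prod n At w)"
    using h by blast
  have "cmod (exp (\<i> * complex_of_real \<alpha>)) = 1" by (metis cis_conv_exp norm_cis)
  moreover have "\<forall>w\<in>Wd N L. mat_tr (word_prod n A w) = exp (\<i> * complex_of_real \<alpha>) * mat_tr (word_prod n At w)"
    using a by (auto simp: Wd_def)
  ultimately show "\<exists>\<kappa>. cmod \<kappa> = 1 \<and> (\<forall>w\<in>Wd N L. mat_tr (word_prod n A w) = \<kappa> * mat_tr (word_prod n At w))"
    by blast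
qed

theorem mainTheorem6:
  fixes n N :: nat and A At :: "nat \<Rightarrow> complex mat"
  assumes n_pos: "n \<ge> 1"
    and A_dim: "\<forall>i<N. A i \<in> carrier_mat n n"
    and At_dim: "\<forall>i<N. At i \<in> carrier_mat n n"
    and A_inj: "injective_tuple n N A"
    and At_inj: "injective_tuple n N At"
  shows
    "((\<forall>L::nat. L > 0 \<and> even L \<longrightarrow>
         (\<exists>\<alpha>::real. \<forall>w. length w = L \<and> set w \<subseteq> {..<N} \<longrightarrow>
            mat_tr (word_prod n A w) = exp (\<i> * complex_of_real \<alpha>) * mat_tr (word_prod n At w)))
      \<longleftrightarrow>
      (\<exists>M Minv z. M \<in> carrier_mat n n \<and> Minv \<in> carrier_mat n n \<and>
          inverts_mat M Minv \<and> inverts_mat Minv M \<and> cmod z = 1 \<and>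
          (\<forall>i<N. A i = z \<cdot>\<^sub>m (Minv * At i * M))))
   \<and>
    ((\<forall>L::nat. odd L \<longrightarrow>
         (\<exists>\<alpha>::real. \<forall>w. length w = L \<and> set w \<subseteq> {..<N} \<longrightarrow>
            mat_tr (word_prod n A w) = exp (\<i> * complex_of_real \<alpha>) * mat_tr (word_prod n At w)))
      \<longleftrightarrow>
      (\<exists>M Minv z. M \<in> carrier_mat n n \<and> Minv \<in> carrier_mat n n \<and>
          inverts_mat M Minv \<and> inverts_mat Minv M \<and> cmod z = 1 \<and>
          (\<forall>i<N. A i = z \<cdot>\<^sub>m (Minv * At i * M))))
   \<and>
    (\<forall>M Minv z M' Minv' z'.
        M \<in> carrier_mat n n \<and> Minv \<in> carrier_mat n n \<and>
        inverts_mat M Minv \<and> inverts_mat Minv M \<and> cmod z = 1 \<and>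
        (\<forall>i<N. A i = z \<cdot>\<^sub>m (Minv * At i * M)) \<and>
        M' \<in> carrier_mat n n \<and> Minv' \<in> carrier_mat n n \<and>
        inverts_mat M' Minv' \<and> inverts_mat Minv' M' \<and> cmod z' = 1 \<and>
        (\<forall>i<N. A i = z' \<cdot>\<^sub>m (Minv' * At i * M'))
      \<longrightarrow> z' = z \<and> (\<exists>c::complex. c \<noteq> 0 \<and> M' = c \<cdot>\<^sub>m M))"
proof -
  obtain l1 where l1: "l1 \<ge> 1" "spans n N A l1" using inj_spans[OF A_dim A_inj] by blast
  obtain l2 where l2: "l2 \<ge> 1" "spans n N At l2" using inj_spans[OF At_dim At_inj] by blast
  define l where "l = max l1 l2"
  have l: "l \<ge> 1" unfolding l_def using l1 by simp
  have spA: "\<And>m. m \<ge> l \<Longrightarrow> spans n N A m"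
    using spans_ge[OF A_dim l1(2) l1(1)] unfolding l_def by simp
  have spAt: "\<And>m. m \<ge> l \<Longrightarrow> spans n N At m"
    using spans_ge[OF At_dim l2(2) l2(1)] unfolding l_def by simp
  have fw: "\<exists>M Minv z. M \<in> carrier_mat n n \<and> Minv \<in> carrier_mat n n \<and>
          inverts_mat M Minv \<and> inverts_mat Minv M \<and> cmod z = 1 \<and>
          (\<forall>i<N. A i = z \<cdot>\<^sub>m (Minv * At i * M))"
    if cov: "\<And>m. m \<ge> 1 \<Longrightarrow> P m \<or> P (Suc m)" and th: "TH n N At A P" for P
  proof -
    have "fwd n N A At P l"
      by (rule fwd.intro) (use A_dim At_dim n_pos l spA spAt th cov in auto)
    then show ?thesis by (rule fwd.main)
  qed
  have bw: "\<exists>\<alpha>::real. \<forall>w. length w = L \<and> set w \<subseteq> {..<N} \<longrightarrow>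
            mat_tr (word_prod n A w) = exp (\<i> * complex_of_real \<alpha>) * mat_tr (word_prod n At w)"
    if "\<exists>M Minv z. M \<in> carrier_mat n n \<and> Minv \<in> carrier_mat n n \<and>
          inverts_mat M Minv \<and> inverts_mat Minv M \<and> cmod z = 1 \<and>
          (\<forall>i<N. A i = z \<cdot>\<^sub>m (Minv * At i * M))" for L
    using that bwd[OF A_dim At_dim] by blast
  have part1: "((\<forall>L::nat. L > 0 \<and> even L \<longrightarrow>
         (\<exists>\<alpha>::real. \<forall>w. length w = L \<and> set w \<subseteq> {..<N} \<longrightarrow>
            mat_tr (word_prod n A w) = exp (\<i> * complex_of_real \<alpha>) * mat_tr (word_prod n At w)))
      \<longleftrightarrow>
      (\<exists>M Minv z. M \<in> carrier_mat n n \<and> Minv \<in> carrier_mat n n \<and>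
          inverts_mat M Minv \<and> inverts_mat Minv M \<and> cmod z = 1 \<and>
          (\<forall>i<N. A i = z \<cdot>\<^sub>m (Minv * At i * M))))"
  proof
    assume h: "\<forall>L::nat. L > 0 \<and> even L \<longrightarrow>
         (\<exists>\<alpha>::real. \<forall>w. length w = L \<and> set w \<subseteq> {..<N} \<longrightarrow>
            mat_tr (word_prod n A w) = exp (\<i> * complex_of_real \<alpha>) * mat_tr (word_prod n At w))"
    show "\<exists>M Minv z. M \<in> carrier_mat n n \<and> Minv \<in> carrier_mat n n \<and>
          inverts_mat M Minv \<and> inverts_mat Minv M \<and> cmod z = 1 \<and>
          (\<forall>i<N. A i = z \<cdot>\<^sub>m (Minv * At i * M))"
      by (rule fw[OF _ hyp_TH[OF h]]) auto
  qed (use bw in blast)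
  have part2: "((\<forall>L::nat. odd L \<longrightarrow>
         (\<exists>\<alpha>::real. \<forall>w. length w = L \<and> set w \<subseteq> {..<N} \<longrightarrow>
            mat_tr (word_prod n A w) = exp (\<i> * complex_of_real \<alpha>) * mat_tr (word_prod n At w)))
      \<longleftrightarrow>
      (\<exists>M Minv z. M \<in> carrier_mat n n \<and> Minv \<in> carrier_mat n n \<and>
          inverts_mat M Minv \<and> inverts_mat Minv M \<and> cmod z = 1 \<and>
          (\<forall>i<N. A i = z \<cdot>\<^sub>m (Minv * At i * M))))"
  proof
    assume h: "\<forall>L::nat. odd L \<longrightarrow>
         (\<exists>\<alpha>::real. \<forall>w. length w = L \<and> set w \<subseteq> {..<N} \<longrightarrow>
            mat_tr (word_prod n A w) = exp (\<i> * complex_of_real \<alpha>) * mat_tr (word_prod n At w))"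
    show "\<exists>M Minv z. M \<in> carrier_mat n n \<and> Minv \<in> carrier_mat n n \<and>
          inverts_mat M Minv \<and> inverts_mat Minv M \<and> cmod z = 1 \<and>
          (\<forall>i<N. A i = z \<cdot>\<^sub>m (Minv * At i * M))"
      by (rule fw[OF _ hyp_TH[OF h]]) auto
  qed (use bw in blast)
  have part3: "\<forall>M Minv z M' Minv' z'.
        M \<in> carrier_mat n n \<and> Minv \<in> carrier_mat n n \<and>
        inverts_mat M Minv \<and> inverts_mat Minv M \<and> cmod z = 1 \<and>
        (\<forall>i<N. A i = z \<cdot>\<^sub>m (Minv * At i * M)) \<and>
        M' \<in> carrier_mat n n \<and> Minv' \<in> carrier_mat n n \<and>
        inverts_mat M' Minv' \<and> inverts_mat Minv' M' \<and> cmod z' = 1 \<and>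
        (\<forall>i<N. A i = z' \<cdot>\<^sub>m (Minv' * At i * M'))
      \<longrightarrow> z' = z \<and> (\<exists>c::complex. c \<noteq> 0 \<and> M' = c \<cdot>\<^sub>m M)"
    using uniq[OF A_dim At_dim n_pos spAt[of l] spAt[of "Suc l"]] by auto
  from part1 part2 part3 show ?thesis by blast
qed

end
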